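(* Let $1\le n\le L$. If $p_i=p$ and $q_i=q$ for all $i$, then $$Z_{L,n}=\binom{L-1}{n-1}\,[n]_{p,q}^{\,L-n},\qquad\text{where } [n]_{p,q}=p^{n-1}+p^{n-2}q+\cdots+pq^{n-2}+q^{n-1}.$$
   Context: Particle labels are taken modulo $n$. $\Omega_{L,n}$ is the set of words $w_1\cdots w_L$ on the ring $\mathbb{Z}/L\mathbb{Z}$ over the alphabet $\{\bullet_1,\dots,\bullet_n,\Box_1,\dots,\Box_n\}$ in which each $\bullet_k$ occurs exactly once, the $\bullet_1,\dots,\bullet_n$ appear in this cyclic order, and the remaining $L-n$ letters are arbitrary $\Box_i$'s. For $w\in\Omega_{L,n}$ let $b_k$ be the position of $\bullet_k$ and $C_k$ the set of positions strictly between $b_k$ and $b_{k+1}$ going cyclically forward ($b_{n+1}=b_1$). For $i,k\in\{1,\dots,n\}$ set $w_\Box(i,k)=p_1\cdots p_{i-1}q_{i+1}\cdots q_kp_{k+1}\cdots p_n$ if $i\le k$ and $w_\Box(i,k)=q_1\cdots q_kp_{k+1}\cdots p_{i-1}q_{i+1}\cdots q_n$ if $k<i$ (empty products are $1$). The weight is $\mathrm{wt}(w)=\prod_{k=1}^n\prod_{j\in C_k}w_\Box(i_j,k)$ where $w_j=\Box_{i_j}$. The restricted partition function is $Z_{L,n}=\sum\mathrm{wt}(w)$, the sum over $w\in\Omega_{L,n}$ with $w_1=\bullet_1$; it is a polynomial in $p_1,\dots,p_n,q_1,\dots,q_n$, and the claim is about its specialization. *)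

theory Defs
  imports Main
begin

text \<open>Letters of a word: Bul k is the particle (bullet) with label k,
  Box i is the empty site (box) with label i. Positions of a word of
  length L are 0..L-1 (position 0 corresponds to w_1), read cyclically.\<close>

datatype letter = Bul nat | Box nat

definition fdist :: "nat \<Rightarrow> nat \<Rightarrow> nat \<Rightarrow> nat" where
  "fdist L a b = (b + L - a) mod L"

definition bpos :: "letter list \<Rightarrow> nat \<Rightarrow> nat" where
  "bpos w k = (THE j. j < length w \<and> w ! j = Bul k)"

definition nextlab :: "nat \<Rightarrow> nat \<Rightarrow> nat" where
  "nextlab n k = (if k = n then 1 else k + 1)"

definition Omega :: "nat \<Rightarrow> nat \<Rightarrow> letter list set" where
  "Omega L n = {w. length w = L
     \<and> (\<forall>j<L. case w ! j of Bul k \<Rightarrow> k \<in> {1..n} | Box i \<Rightarrow> i \<in> {1..n})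
     \<and> (\<forall>k\<in>{1..n}. card {j. j < L \<and> w ! j = Bul k} = 1)
     \<and> (\<forall>k\<in>{1..<n}. fdist L (bpos w 1) (bpos w k) < fdist L (bpos w 1) (bpos w (k+1)))}"

text \<open>C_k: positions strictly between b_k and b_{k+1} going cyclically forward
  (b_{n+1} = b_1; when b_{k+1} = b_k, i.e. n = 1, this is all other positions).\<close>
definition Cset :: "nat \<Rightarrow> letter list \<Rightarrow> nat \<Rightarrow> nat set" where
  "Cset n w k = (let L = length w; a = bpos w k; b = bpos w (nextlab n k);
                     s = (if a = b then L else fdist L a b)
                 in {j. j < L \<and> 0 < fdist L a j \<and> fdist L a j < s})"

definition wbox :: "nat \<Rightarrow> (nat \<Rightarrow> 'a::comm_ring_1) \<Rightarrow> (nat \<Rightarrow> 'a) \<Rightarrow> nat \<Rightarrow> nat \<Rightarrow> 'a" where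
  "wbox n p q i k = (if i \<le> k
     then (\<Prod>m\<in>{1..<i}. p m) * (\<Prod>m\<in>{i<..k}. q m) * (\<Prod>m\<in>{k<..n}. p m)
     else (\<Prod>m\<in>{1..k}. q m) * (\<Prod>m\<in>{k<..<i}. p m) * (\<Prod>m\<in>{i<..n}. q m))"

definition wt :: "nat \<Rightarrow> (nat \<Rightarrow> 'a::comm_ring_1) \<Rightarrow> (nat \<Rightarrow> 'a) \<Rightarrow> letter list \<Rightarrow> 'a" where
  "wt n p q w = (\<Prod>k\<in>{1..n}. \<Prod>j\<in>Cset n w k.
      (case w ! j of Box i \<Rightarrow> wbox n p q i k | Bul _ \<Rightarrow> 1))"

definition Zpart :: "nat \<Rightarrow> nat \<Rightarrow> (nat \<Rightarrow> 'a::comm_ring_1) \<Rightarrow> (nat \<Rightarrow> 'a) \<Rightarrow> 'a" where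
  "Zpart L n p q = (\<Sum>w\<in>{w\<in>Omega L n. w ! 0 = Bul 1}. wt n p q w)"

definition qint :: "nat \<Rightarrow> 'a::comm_ring_1 \<Rightarrow> 'a \<Rightarrow> 'a" where
  "qint n p q = (\<Sum>j<n. p ^ (n - 1 - j) * q ^ j)"

end

theory Submission
  imports Defs
begin

fun isB :: "letter \<Rightarrow> bool" where
  "isB (Bul _) = True" | "isB (Box _) = False"

definition nbt :: "letter list \<Rightarrow> nat \<Rightarrow> nat" where
  "nbt w j = length (filter isB (take j w))"

lemma nbt_0[simp]: "nbt w 0 = 0" by (simp add: nbt_def)

lemma nbt_Suc: "j < length w \<Longrightarrow> nbt w (Suc j) = nbt w j + (if isB (w!j) then 1 else 0)"
  by (simp add: nbt_def take_Suc_conv_app_nth)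

lemma nbt_ge: "length w \<le> j \<Longrightarrow> nbt w j = nbt w (length w)"
  by (simp add: nbt_def)

lemma nbt_Suc_le: "nbt w j \<le> nbt w (Suc j)"
proof (cases "j < length w")
  case True then show ?thesis by (simp add: nbt_Suc)
next
  case False then show ?thesis by (simp add: nbt_def)
qed

lemma nbt_mono: "a \<le> b \<Longrightarrow> nbt w a \<le> nbt w b"
  by (rule lift_Suc_mono_le[of "nbt w"]) (rule nbt_Suc_le, assumption)

lemma nbt_less_imp: "nbt w a < nbt w b \<Longrightarrow> a < b"
proof (rule ccontr)
  assume h: "nbt w a < nbt w b" "\<not> a < b"
  then have "b \<le> a" by simp
  then have "nbt w b \<le> nbt w a" by (rule nbt_mono)
  with h show False by simp
qed

lemma nbt_Cons: "nbt (x # u) (Suc j) = (if isB x then 1 else 0) + nbt u j"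
  by (simp add: nbt_def)

lemma nbt_card: "nbt w j = card {i. i < j \<and> i < length w \<and> isB (w!i)}"
proof -
  have "nbt w j = card {i. i < length (take j w) \<and> isB (take j w ! i)}"
    unfolding nbt_def by (rule length_filter_conv_card)
  also have "{i. i < length (take j w) \<and> isB (take j w ! i)} = {i. i < j \<and> i < length w \<and> isB (w!i)}"
    by auto
  finally show ?thesis .
qed

lemma fdist_eq: "a < L \<Longrightarrow> j < L \<Longrightarrow> fdist L a j = (if a \<le> j then j - a else j + L - a)"
proof -
  assume a: "a < L" "j < L"
  show ?thesis
  proof (cases "a \<le> j")
    case True
    have e: "j + L - a = (j - a) + L" using True by simp
    have "fdist L a j = ((j - a) + L) mod L" by (simp only: fdist_def e)
    also have "\<dots> = j - a" using a by simp
    finally show ?thesis using True by simp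
  next
    case False
    then show ?thesis using a by (simp add: fdist_def)
  qed
qed

lemma ivt_nat:
  fixes f :: "nat \<Rightarrow> nat"
  assumes "f 0 = 0" "\<And>j. j < L \<Longrightarrow> f (Suc j) \<le> f j + 1"
  shows "v < f L \<Longrightarrow> \<exists>j<L. f j = v \<and> f (Suc j) = Suc v"
  using assms(2)
proof (induction L)
  case 0 then show ?case using assms(1) by simp
next
  case (Suc L)
  show ?case
  proof (cases "v < f L")
    case True
    then obtain j where "j<L" "f j = v" "f (Suc j) = Suc v" using Suc by auto
    then show ?thesis by (intro exI[of _ j]) simp
  next
    case False
    have "f (Suc L) \<le> f L + 1" using Suc.prems(2) by simp
    then have "f L = v" "f (Suc L) = Suc v" using False Suc.prems(1) by simp_all
    then show ?thesis by (intro exI[of _ L]) simp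
  qed
qed

definition okw :: "nat \<Rightarrow> letter list \<Rightarrow> bool" where
  "okw n w = ((\<forall>j<length w. case w!j of Bul k \<Rightarrow> k = nbt w j + 1 | Box i \<Rightarrow> i \<in> {1..n})
              \<and> nbt w (length w) = n)"

lemma bpos_eq: "(\<exists>!j. j < length w \<and> w!j = Bul k) \<Longrightarrow> j < length w \<Longrightarrow> w!j = Bul k \<Longrightarrow> bpos w k = j"
  unfolding bpos_def by (rule the1_equality) auto

lemma bpos_prop: "(\<exists>!j. j < length w \<and> w!j = Bul k) \<Longrightarrow> bpos w k < length w \<and> w!(bpos w k) = Bul k"
  unfolding bpos_def by (rule theI') 

fun okl :: "nat \<Rightarrow> nat \<Rightarrow> letter list \<Rightarrow> bool" where
  "okl n k [] = (k = n)"
| "okl n k (Box i # u) = (i \<in> {1..n} \<and> okl n k u)"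
| "okl n k (Bul j # u) = (j = Suc k \<and> okl n (Suc k) u)"

lemma okl_iff: "okl n k u \<longleftrightarrow> (\<forall>j<length u. case u!j of Bul k' \<Rightarrow> k' = k + nbt u j + 1 | Box i \<Rightarrow> i \<in> {1..n})
    \<and> k + nbt u (length u) = n"
proof (induction u arbitrary: k)
  case Nil then show ?case by simp
next
  case (Cons x u)
  show ?case
  proof (cases x)
    case (Bul j)
    show ?thesis using Cons.IH[of "Suc k"] unfolding Bul
      by (simp only: okl.simps length_Cons All_less_Suc2 nbt_Cons nth_Cons_0 nth_Cons_Suc isB.simps nbt_0
           letter.case if_True) (auto cong: letter.case_cong)
  next
    case (Box i)
    show ?thesis using Cons.IH[of k] unfolding Box
      by (simp only: okl.simps length_Cons All_less_Suc2 nbt_Cons nth_Cons_0 nth_Cons_Suc isB.simps nbt_0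
           letter.case if_False) (auto cong: letter.case_cong)
  qed
qed

lemma okl_okw: "okl n 0 w \<longleftrightarrow> okw n w"
  unfolding okl_iff okw_def by (simp cong: letter.case_cong)

lemma okw_label:
  assumes "okw n w" "j < length w" "w!j = Bul k"
  shows "k = nbt w j + 1" "nbt w (Suc j) = k" "k \<in> {1..n}"
proof -
  show k: "k = nbt w j + 1" using assms unfolding okw_def by (metis letter.simps(5))
  show s: "nbt w (Suc j) = k" using assms k by (simp add: nbt_Suc)
  have "nbt w (Suc j) \<le> nbt w (length w)" using assms(2) by (intro nbt_mono) simp
  then show "k \<in> {1..n}" using s k assms(1) unfolding okw_def by simp
qed

lemma okw_box:
  assumes "okw n w" "j < length w" "w!j = Box i"
  shows "i \<in> {1..n}"
  using assms unfolding okw_def by (metis letter.simps(6))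

lemma okw_exists:
  assumes "okw n w" "k \<in> {1..n}"
  shows "\<exists>j<length w. w!j = Bul k"
proof -
  have st: "nbt w (Suc j) \<le> nbt w j + 1" if "j < length w" for j
    using that by (simp add: nbt_Suc)
  have "k - 1 < nbt w (length w)" using assms unfolding okw_def by auto
  then obtain j where j: "j < length w" "nbt w j = k - 1" "nbt w (Suc j) = Suc (k - 1)"
    using ivt_nat[of "nbt w" "length w" "k - 1"] st by auto
  show ?thesis
  proof (cases "w!j")
    case (Bul k')
    then have "k' = nbt w j + 1" using okw_label assms j by blast
    then show ?thesis using Bul j assms by (intro exI[of _ j]) auto
  next
    case (Box i)
    then have "nbt w (Suc j) = nbt w j" using j by (simp add: nbt_Suc)
    then show ?thesis using j by simp
  qed
qed

lemma okw_unique: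
  assumes "okw n w" "j < length w" "w!j = Bul k" "j' < length w" "w!j' = Bul k"
  shows "j = j'"
proof -
  have a: "nbt w j + 1 = k" "nbt w (Suc j) = k" "nbt w j' + 1 = k" "nbt w (Suc j') = k"
    using okw_label[OF assms(1,2,3)] okw_label[OF assms(1,4,5)] by simp_all
  show ?thesis
  proof (rule ccontr)
    assume "j \<noteq> j'"
    then have "Suc j \<le> j' \<or> Suc j' \<le> j" by auto
    then show False
    proof
      assume "Suc j \<le> j'" then have "nbt w (Suc j) \<le> nbt w j'" by (rule nbt_mono)
      then show False using a by simp
    next
      assume "Suc j' \<le> j" then have "nbt w (Suc j') \<le> nbt w j" by (rule nbt_mono)
      then show False using a by simp
    qed
  qed
qed

lemma okw_ex1:
  assumes "okw n w" "k \<in> {1..n}"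
  shows "\<exists>!j. j < length w \<and> w!j = Bul k"
  using okw_exists[OF assms] okw_unique[OF assms(1)] by blast

lemma okw_bpos:
  assumes "okw n w" "k \<in> {1..n}"
  shows "bpos w k < length w" "w!(bpos w k) = Bul k" "nbt w (bpos w k) = k - 1"
proof -
  show "bpos w k < length w" "w!(bpos w k) = Bul k" using bpos_prop[OF okw_ex1[OF assms]] by auto
  then show "nbt w (bpos w k) = k - 1" using okw_label(1)[OF assms(1)] by fastforce
qed

lemma okw_bpos1:
  assumes "okw n w" "1 \<le> n" "0 < length w" "w!0 = Bul 1"
  shows "bpos w 1 = 0"
  using bpos_eq[OF okw_ex1[OF assms(1)] assms(3,4)] assms(2) by simp

lemma okw_bpos_less:
  assumes "okw n w" "a \<in> {1..n}" "b \<in> {1..n}" "a < b"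
  shows "bpos w a < bpos w b"
proof -
  have "nbt w (bpos w a) = a - 1" "nbt w (bpos w b) = b - 1"
    using okw_bpos(3)[OF assms(1,2)] okw_bpos(3)[OF assms(1,3)] by simp_all
  moreover have "a - 1 < b - 1" using assms(2,4) by (intro diff_less_mono) auto
  ultimately have "nbt w (bpos w a) < nbt w (bpos w b)" by simp
  then show ?thesis by (rule nbt_less_imp)
qed

lemma okw_Omega:
  assumes "okw n w" "1 \<le> n" "0 < length w" "w!0 = Bul 1"
  shows "w \<in> Omega (length w) n"
  unfolding Omega_def
proof (intro CollectI conjI ballI allI impI)
  show "length w = length w" ..
  fix j assume j: "j < length w"
  show "case w ! j of Bul k \<Rightarrow> k \<in> {1..n} | Box i \<Rightarrow> i \<in> {1..n}"
    using okw_label(3)[OF assms(1) j] okw_box[OF assms(1) j] by (cases "w!j") auto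
next
  fix k assume k: "k \<in> {1..n}"
  have "{j. j < length w \<and> w!j = Bul k} = {bpos w k}"
    using okw_bpos[OF assms(1) k] okw_unique[OF assms(1)] by blast
  then show "card {j. j < length w \<and> w!j = Bul k} = 1" by simp
next
  fix k assume k: "k \<in> {1..<n}"
  have f: "fdist (length w) 0 x = x" if "x < length w" for x
    using fdist_eq[OF assms(3) that] by simp
  have "bpos w k < bpos w (k+1)" using okw_bpos_less[OF assms(1)] k by simp
  then show "fdist (length w) (bpos w 1) (bpos w k) < fdist (length w) (bpos w 1) (bpos w (k + 1))"
    unfolding okw_bpos1[OF assms] using f okw_bpos(1)[OF assms(1)] k by simp
qed

lemma chain_mono:
  fixes f :: "nat \<Rightarrow> nat"
  assumes "\<And>k. 1 \<le> k \<Longrightarrow> k < n \<Longrightarrow> f k < f (Suc k)"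
  shows "1 \<le> a \<Longrightarrow> a < b \<Longrightarrow> b \<le> n \<Longrightarrow> f a < f b"
proof (induction b)
  case 0 then show ?case by simp
next
  case (Suc b)
  show ?case
  proof (cases "a = b")
    case True then show ?thesis using assms Suc.prems by simp
  next
    case False
    then have "f a < f b" using Suc by simp
    also have "f b < f (Suc b)" using assms Suc.prems False by simp
    finally show ?thesis .
  qed
qed

lemma Omega_okw:
  assumes om: "w \<in> Omega L n" and n1: "1 \<le> n" and w0: "w!0 = Bul 1"
  shows "okw n w"
proof -
  have len: "length w = L" using om unfolding Omega_def by simp
  have lab: "case w!j of Bul k \<Rightarrow> k \<in> {1..n} | Box i \<Rightarrow> i \<in> {1..n}" if "j < L" for j
    using om that unfolding Omega_def by simp
  have ex1: "\<exists>!j. j < length w \<and> w!j = Bul k" if k: "k \<in> {1..n}" for k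
  proof -
    have "card {j. j < L \<and> w!j = Bul k} = 1" using om k unfolding Omega_def by simp
    then obtain x where x: "{j. j < L \<and> w!j = Bul k} = {x}" by (rule card_1_singletonE)
    show ?thesis
    proof (rule ex1I[of _ x])
      show "x < length w \<and> w ! x = Bul k" using x len by blast
      fix y assume "y < length w \<and> w ! y = Bul k"
      then have "y \<in> {j. j < L \<and> w!j = Bul k}" using len by simp
      then show "y = x" using x by simp
    qed
  qed
  define \<beta> where "\<beta> = bpos w"
  have bp: "\<beta> k < L" "w!(\<beta> k) = Bul k" if "k \<in> {1..n}" for k
    using bpos_prop[OF ex1[OF that]] len unfolding \<beta>_def by auto
  have L0: "0 < L" using bp(1)[of 1] n1 by simp
  have b1: "\<beta> 1 = 0" unfolding \<beta>_def using bpos_eq[OF ex1[of 1]] n1 L0 len w0 by simp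
  have f0: "fdist L 0 x = x" if "x < L" for x using fdist_eq[OF L0 that] by simp
  have chain: "\<beta> k < \<beta> (Suc k)" if "1 \<le> k" "k < n" for k
  proof -
    have "fdist L (\<beta> 1) (\<beta> k) < fdist L (\<beta> 1) (\<beta> (k+1))"
      using om that unfolding Omega_def \<beta>_def by simp
    then show ?thesis unfolding b1 using f0 bp(1) that by simp
  qed
  have mono: "\<beta> a < \<beta> b" if "a \<in> {1..n}" "b \<in> {1..n}" "a < b" for a b
    using chain_mono[of n \<beta> a b, OF chain] that by simp
  have bul: "k \<in> {1..n} \<and> j = \<beta> k" if "j < L" "w!j = Bul k" for j k
  proof -
    have k: "k \<in> {1..n}" using lab[OF that(1)] that(2) by simp
    then have "j = \<beta> k" using ex1[OF k] bp[OF k] that len by blast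
    then show ?thesis using k by simp
  qed
  have inj: "inj_on \<beta> {1..n}"
  proof (rule inj_onI)
    fix a b assume "a \<in> {1..n}" "b \<in> {1..n}" "\<beta> a = \<beta> b"
    then have "Bul a = Bul b" using bp(2) by metis
    then show "a = b" by simp
  qed
  have set1: "{i. i < \<beta> k \<and> i < length w \<and> isB (w!i)} = \<beta> ` {1..<k}" if k: "k \<in> {1..n}" for k
  proof (intro set_eqI iffI)
    fix i assume i: "i \<in> {i. i < \<beta> k \<and> i < length w \<and> isB (w!i)}"
    then obtain k'' where k'': "w!i = Bul k''" by (cases "w!i") auto
    have il: "i < L" using i len by simp
    have b: "k'' \<in> {1..n}" "i = \<beta> k''" using bul[OF il k''] by auto
    have "k'' < k"
    proof (rule ccontr)
      assume "\<not> k'' < k"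
      then have "k = k'' \<or> k < k''" by auto
      then have "\<beta> k \<le> \<beta> k''" using mono[OF k b(1)] by auto
      then show False using i b(2) by simp
    qed
    then show "i \<in> \<beta> ` {1..<k}" using b by auto
  next
    fix i assume "i \<in> \<beta> ` {1..<k}"
    then obtain k' where k': "k' \<in> {1..<k}" "i = \<beta> k'" by auto
    have k'n: "k' \<in> {1..n}" using k' k by simp
    show "i \<in> {i. i < \<beta> k \<and> i < length w \<and> isB (w!i)}"
      using mono[OF k'n k] k' bp[OF k'n] len by simp
  qed
  have set2: "{i. i < length w \<and> i < length w \<and> isB (w!i)} = \<beta> ` {1..n}"
  proof (intro set_eqI iffI)
    fix i assume i: "i \<in> {i. i < length w \<and> i < length w \<and> isB (w!i)}"
    then obtain k'' where k'': "w!i = Bul k''" by (cases "w!i") auto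
    have il: "i < L" using i len by simp
    show "i \<in> \<beta> ` {1..n}" using bul[OF il k''] by auto
  next
    fix i assume "i \<in> \<beta> ` {1..n}"
    then obtain k' where k': "k' \<in> {1..n}" "i = \<beta> k'" by auto
    show "i \<in> {i. i < length w \<and> i < length w \<and> isB (w!i)}"
      using k' bp[OF k'(1)] len by simp
  qed
  have nb: "nbt w (\<beta> k) = k - 1" if k: "k \<in> {1..n}" for k
  proof -
    have "inj_on \<beta> {1..<k}" using k by (intro inj_on_subset[OF inj]) auto
    then show ?thesis unfolding nbt_card set1[OF k] by (simp add: card_image)
  qed
  have nL: "nbt w (length w) = n"
    unfolding nbt_card set2 using inj by (simp add: card_image)
  show ?thesis unfolding okw_def
  proof (intro conjI allI impI nL)
    fix j assume j: "j < length w"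
    show "case w ! j of Bul k \<Rightarrow> k = nbt w j + 1 | Box i \<Rightarrow> i \<in> {1..n}"
    proof (cases "w!j")
      case (Bul k)
      have b: "k \<in> {1..n}" "j = \<beta> k" using bul[of j k] j len Bul by auto
      then show ?thesis using Bul nb[OF b(1)] by simp
    next
      case (Box i) then show ?thesis using lab[of j] j len by simp
    qed
  qed
qed

lemma wt_prod:
  fixes p q :: "nat \<Rightarrow> 'a::comm_ring_1"
  assumes ok: "okw n w" and n1: "1 \<le> n" and L0: "0 < length w" and w0: "w!0 = Bul 1"
  shows "wt n p q w = (\<Prod>j<length w. case w!j of Box i \<Rightarrow> wbox n p q i (nbt w j) | Bul _ \<Rightarrow> 1)"
proof -
  define L where "L = length w"
  define \<beta> where "\<beta> = bpos w"
  have bp: "\<beta> k < L" "w!(\<beta> k) = Bul k" "nbt w (\<beta> k) = k - 1" if "k \<in> {1..n}" for k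
    using okw_bpos[OF ok that] unfolding \<beta>_def L_def by auto
  have b1: "\<beta> 1 = 0" unfolding \<beta>_def by (rule okw_bpos1[OF ok n1 L0 w0])
  have mono: "\<beta> a < \<beta> b" if "a \<in> {1..n}" "b \<in> {1..n}" "a < b" for a b
    unfolding \<beta>_def by (rule okw_bpos_less[OF ok that])
  have nL: "nbt w L = n" using ok unfolding okw_def L_def by simp
  define E where "E k = (if k < n then \<beta> (Suc k) else L)" for k
  have ELk: "E k \<le> L" if "k \<in> {1..n}" for k
  proof (cases "k < n")
    case True then have sk: "Suc k \<in> {1..n}" using that by simp
    then show ?thesis using True bp(1)[OF sk] unfolding E_def by simp
  qed (simp add: E_def)
  have Cs: "Cset n w k = {j. \<beta> k < j \<and> j < E k}" if k: "k \<in> {1..n}" for k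
  proof -
    let ?s = "(if \<beta> k = \<beta> (nextlab n k) then L else fdist L (\<beta> k) (\<beta> (nextlab n k)))"
    have g: "Cset n w k = {j. j < L \<and> 0 < fdist L (\<beta> k) j \<and> fdist L (\<beta> k) j < ?s}"
      unfolding Cset_def Let_def L_def \<beta>_def by simp
    have bkL: "\<beta> k < L" using bp(1)[OF k] .
    have sE: "?s = E k - \<beta> k" and bE: "\<beta> k < E k" and EL: "E k \<le> L"
    proof -
      have "?s = E k - \<beta> k \<and> \<beta> k < E k \<and> E k \<le> L"
      proof (cases "k < n")
        case True
        have k1: "Suc k \<in> {1..n}" using True by simp
        have lt: "\<beta> k < \<beta> (Suc k)" using mono[OF k k1] by simp
        have "fdist L (\<beta> k) (\<beta> (Suc k)) = \<beta> (Suc k) - \<beta> k"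
          using fdist_eq[OF bkL bp(1)[OF k1]] lt by simp
        then show ?thesis using True lt bp(1)[OF k1] unfolding E_def nextlab_def by simp
      next
        case False
        then have kn: "k = n" using k by simp
        show ?thesis
        proof (cases "n = 1")
          case True
          then show ?thesis using kn b1 L0 unfolding E_def nextlab_def L_def by simp
        next
          case False
          then have "\<beta> 1 < \<beta> n" using mono[of 1 n] n1 by simp
          then have pos: "0 < \<beta> k" using b1 kn by simp
          have "fdist L (\<beta> k) 0 = L - \<beta> k"
            using fdist_eq[OF bkL, of 0] pos bkL by simp
          then show ?thesis using kn pos b1 bkL unfolding E_def nextlab_def by simp
        qed
      qed
      then show "?s = E k - \<beta> k" "\<beta> k < E k" "E k \<le> L" by auto
    qed
    show ?thesis unfolding g sE
    proof (intro set_eqI iffI)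
      fix j assume "j \<in> {j. j < L \<and> 0 < fdist L (\<beta> k) j \<and> fdist L (\<beta> k) j < E k - \<beta> k}"
      then have j: "j < L" "0 < fdist L (\<beta> k) j" "fdist L (\<beta> k) j < E k - \<beta> k" by auto
      show "j \<in> {j. \<beta> k < j \<and> j < E k}"
      proof (cases "\<beta> k \<le> j")
        case True then show ?thesis using j fdist_eq[OF bkL j(1)] by auto
      next
        case False then show ?thesis using j fdist_eq[OF bkL j(1)] EL by auto
      qed
    next
      fix j assume "j \<in> {j. \<beta> k < j \<and> j < E k}"
      then have j: "\<beta> k < j" "j < E k" by auto
      have jL: "j < L" using j EL by simp
      show "j \<in> {j. j < L \<and> 0 < fdist L (\<beta> k) j \<and> fdist L (\<beta> k) j < E k - \<beta> k}"
        using j jL fdist_eq[OF bkL jL] by auto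
    qed
  qed
  have inC: "nbt w j = k \<and> (\<forall>k'. w!j \<noteq> Bul k')" if k: "k \<in> {1..n}" and j: "j \<in> Cset n w k" for j k
  proof -
    have j2: "\<beta> k < j" "j < E k" using j Cs[OF k] by auto
    have jL: "j < L" using j2 ELk[OF k] by simp
    have "nbt w (Suc (\<beta> k)) = k" using okw_label(2)[OF ok _ bp(2)[OF k]] bp(1)[OF k] unfolding L_def by simp
    moreover have "nbt w (Suc (\<beta> k)) \<le> nbt w j" using j2 by (intro nbt_mono) simp
    ultimately have ge: "k \<le> nbt w j" by simp
    have le: "nbt w j \<le> k"
    proof (cases "k < n")
      case True
      have k1: "Suc k \<in> {1..n}" using True by simp
      have "nbt w j \<le> nbt w (\<beta> (Suc k))" using j2 True unfolding E_def by (intro nbt_mono) simp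
      then show ?thesis using bp(3)[OF k1] by simp
    next
      case False
      have "nbt w j \<le> nbt w L" using jL by (intro nbt_mono) simp
      then show ?thesis using nL False k by simp
    qed
    have eq: "nbt w j = k" using ge le by simp
    have nb: "w!j \<noteq> Bul k'" for k'
    proof
      assume b: "w!j = Bul k'"
      have "k' = nbt w j + 1" "k' \<in> {1..n}" using okw_label[OF ok _ b] jL unfolding L_def by auto
      then have k': "k' = Suc k" "Suc k \<in> {1..n}" using eq by auto
      then have "k < n" by simp
      have "j = \<beta> (Suc k)" using okw_unique[OF ok _ b, of "\<beta> (Suc k)"] bp[OF k'(2)] jL k'(1)
        unfolding L_def by simp
      then show False using j2 \<open>k < n\<close> unfolding E_def by simp
    qed
    show ?thesis using eq nb by simp
  qed
  have cover: "j \<in> Cset n w (nbt w j) \<and> nbt w j \<in> {1..n}" if jL: "j < L" and box: "w!j = Box i" for j i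
  proof -
    have j0: "0 < j" using box w0 by (cases j) auto
    have "nbt w 1 = 1" using L0 w0 by (simp add: nbt_Suc[of 0 w, simplified])
    moreover have "nbt w 1 \<le> nbt w j" using j0 by (intro nbt_mono) simp
    ultimately have k1: "1 \<le> nbt w j" by simp
    have kn: "nbt w j \<le> n" using nL nbt_mono[of j L w] jL by simp
    define k where "k = nbt w j"
    have k: "k \<in> {1..n}" using k1 kn k_def by simp
    have "nbt w (\<beta> k) < nbt w j" using bp(3)[OF k] k k_def by simp
    then have a: "\<beta> k < j" by (rule nbt_less_imp)
    have b: "j < E k"
    proof (cases "k < n")
      case True
      have k1: "Suc k \<in> {1..n}" using True by simp
      have "nbt w (Suc (\<beta> (Suc k))) = Suc k"
        using okw_label(2)[OF ok _ bp(2)[OF k1]] bp(1)[OF k1] unfolding L_def by simp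
      then have "nbt w j < nbt w (Suc (\<beta> (Suc k)))" using k_def by simp
      then have "j < Suc (\<beta> (Suc k))" by (rule nbt_less_imp)
      moreover have "j \<noteq> \<beta> (Suc k)" using bp(2)[OF k1] box by auto
      ultimately show ?thesis using True unfolding E_def by simp
    next
      case False then show ?thesis using jL unfolding E_def by simp
    qed
    show ?thesis using a b Cs[OF k] k k_def by simp
  qed
  define G where "G j = (case w!j of Box i \<Rightarrow> wbox n p q i (nbt w j) | Bul _ \<Rightarrow> 1)" for j
  have CL: "Cset n w k \<subseteq> {..<L}" if "k \<in> {1..n}" for k
  proof
    fix j assume "j \<in> Cset n w k"
    then show "j \<in> {..<L}" using Cs[OF that] ELk[OF that] by auto
  qed
  have "wt n p q w = (\<Prod>k\<in>{1..n}. \<Prod>j\<in>Cset n w k. G j)"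
    unfolding wt_def
  proof (intro prod.cong refl)
    fix k j assume k: "k \<in> {1..n}" and j: "j \<in> Cset n w k"
    show "(case w ! j of Box i \<Rightarrow> wbox n p q i k | Bul x \<Rightarrow> 1) = G j"
      using inC[OF k j] unfolding G_def by (cases "w!j") auto
  qed
  also have "\<dots> = (\<Prod>j\<in>(\<Union>k\<in>{1..n}. Cset n w k). G j)"
  proof (rule prod.UNION_disjoint[symmetric])
    show "finite {1..n}" by simp
    show "\<forall>i\<in>{1..n}. finite (Cset n w i)"
    proof
      fix i assume "i \<in> {1..n}"
      show "finite (Cset n w i)" using CL[OF \<open>i \<in> {1..n}\<close>] by (rule finite_subset) simp
    qed
    show "\<forall>i\<in>{1..n}. \<forall>j\<in>{1..n}. i \<noteq> j \<longrightarrow> Cset n w i \<inter> Cset n w j = {}"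
    proof (intro ballI impI)
      fix a b assume a: "a \<in> {1..n}" and b: "b \<in> {1..n}" and ab: "a \<noteq> b"
      show "Cset n w a \<inter> Cset n w b = {}"
      proof (intro equalityI subsetI)
        fix x assume x: "x \<in> Cset n w a \<inter> Cset n w b"
        then have xa: "x \<in> Cset n w a" and xb: "x \<in> Cset n w b" by auto
        have "nbt w x = a" "nbt w x = b" using inC[OF a xa] inC[OF b xb] by auto
        then show "x \<in> {}" using ab by simp
      qed simp
    qed
  qed
  also have "\<dots> = (\<Prod>j\<in>{..<L}. G j)"
  proof (rule prod.mono_neutral_left)
    show "finite {..<L}" by simp
    show "(\<Union>k\<in>{1..n}. Cset n w k) \<subseteq> {..<L}" by (intro UN_least CL)
    show "\<forall>i\<in>{..<L} - (\<Union>k\<in>{1..n}. Cset n w k). G i = 1"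
    proof
      fix j assume j: "j \<in> {..<L} - (\<Union>k\<in>{1..n}. Cset n w k)"
      show "G j = 1"
      proof (cases "w!j")
        case (Bul k) then show ?thesis unfolding G_def by simp
      next
        case (Box i)
        have jL: "j < L" using j by simp
        have c: "j \<in> Cset n w (nbt w j)" "nbt w j \<in> {1..n}" using cover[OF jL Box] by auto
        have "j \<in> (\<Union>k\<in>{1..n}. Cset n w k)" using c(2,1) by (rule UN_I)
        then show ?thesis using j by simp
      qed
    qed
  qed
  finally show ?thesis unfolding G_def L_def .
qed

fun Wl :: "(nat \<Rightarrow> nat \<Rightarrow> 'a::comm_ring_1) \<Rightarrow> nat \<Rightarrow> letter list \<Rightarrow> 'a" where
  "Wl g k [] = 1"
| "Wl g k (Box i # u) = g i k * Wl g k u"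
| "Wl g k (Bul j # u) = Wl g (Suc k) u"

lemma okl_le: "okl n k u \<Longrightarrow> k \<le> n"
  by (induction n k u rule: okl.induct) auto

definition Sset :: "nat \<Rightarrow> nat \<Rightarrow> nat \<Rightarrow> letter list set" where
  "Sset n m k = {u. length u = m \<and> okl n k u}"

lemma Sset_0: "Sset n 0 k = (if k = n then {[]} else {})"
  by (auto simp: Sset_def)

lemma Sset_Suc: "Sset n (Suc m) k =
   (\<lambda>(i,u). Box i # u) ` ({1..n} \<times> Sset n m k) \<union> (\<lambda>u. Bul (Suc k) # u) ` Sset n m (Suc k)"
proof (intro set_eqI iffI)
  fix u assume "u \<in> Sset n (Suc m) k"
  then obtain x v where u: "u = x # v" and l: "length v = m" and ok: "okl n k (x # v)"
    by (cases u) (auto simp: Sset_def)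
  show "u \<in> (\<lambda>(i,u). Box i # u) ` ({1..n} \<times> Sset n m k) \<union> (\<lambda>u. Bul (Suc k) # u) ` Sset n m (Suc k)"
  proof (cases x)
    case (Bul j)
    then have "v \<in> Sset n m (Suc k)" "j = Suc k" using ok l by (auto simp: Sset_def)
    then show ?thesis using u Bul by blast
  next
    case (Box i)
    then have "(i, v) \<in> {1..n} \<times> Sset n m k" using ok l by (auto simp: Sset_def)
    then have "Box i # v \<in> (\<lambda>(i,u). Box i # u) ` ({1..n} \<times> Sset n m k)"
      by (rule rev_image_eqI) simp
    then show ?thesis using u Box by blast
  qed
next
  fix u assume "u \<in> (\<lambda>(i,u). Box i # u) ` ({1..n} \<times> Sset n m k) \<union> (\<lambda>u. Bul (Suc k) # u) ` Sset n m (Suc k)"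
  then show "u \<in> Sset n (Suc m) k" by (auto simp: Sset_def)
qed

lemma finite_Sset: "finite (Sset n m k)"
proof (induction m arbitrary: k)
  case 0 show ?case by (simp add: Sset_0)
next
  case (Suc m)
  have "finite ({1..n} \<times> Sset n m k)" using Suc.IH[of k] by (intro finite_cartesian_product) simp_all
  then have "finite ((\<lambda>(i,u). Box i # u) ` ({1..n} \<times> Sset n m k))" by (rule finite_imageI)
  moreover have "finite ((\<lambda>u. Bul (Suc k) # u) ` Sset n m (Suc k))" using Suc.IH[of "Suc k"] by (rule finite_imageI)
  ultimately show ?case unfolding Sset_Suc by (rule finite_UnI)
qed

lemma count_sum:
  fixes g :: "nat \<Rightarrow> nat \<Rightarrow> 'a::comm_ring_1"
  assumes gs: "\<And>k. 1 \<le> k \<Longrightarrow> k \<le> n \<Longrightarrow> (\<Sum>i\<in>{1..n}. g i k) = Q"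
  shows "1 \<le> k \<Longrightarrow> k \<le> n \<Longrightarrow> (\<Sum>u\<in>Sset n m k. Wl g k u) = of_nat (m choose (n - k)) * Q ^ (m - (n - k))"
proof (induction m arbitrary: k)
  case 0
  show ?case
  proof (cases "k = n")
    case False
    then obtain r where "n - k = Suc r" using 0 by (metis Suc_diff_Suc le_neq_implies_less)
    then show ?thesis using False by (simp add: Sset_0)
  qed (simp add: Sset_0)
next
  case (Suc m)
  let ?A = "(\<lambda>(i,u). Box i # u) ` ({1..n} \<times> Sset n m k)"
  let ?B = "(\<lambda>u. Bul (Suc k) # u) ` Sset n m (Suc k)"
  have disj: "?A \<inter> ?B = {}" by auto
  have injA: "inj_on (\<lambda>(i,u). Box i # u) ({1..n} \<times> Sset n m k)" by (auto simp: inj_on_def)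
  have injB: "inj_on (\<lambda>u. Bul (Suc k) # u) (Sset n m (Suc k))" by (auto simp: inj_on_def)
  have sA: "(\<Sum>u\<in>?A. Wl g k u) = Q * (\<Sum>u\<in>Sset n m k. Wl g k u)"
  proof -
    have "(\<Sum>u\<in>?A. Wl g k u) = (\<Sum>(i,u)\<in>{1..n} \<times> Sset n m k. g i k * Wl g k u)"
      by (subst sum.reindex[OF injA]) (simp add: case_prod_unfold)
    also have "\<dots> = (\<Sum>i\<in>{1..n}. \<Sum>u\<in>Sset n m k. g i k * Wl g k u)"
      by (rule sum.cartesian_product[symmetric])
    also have "\<dots> = (\<Sum>i\<in>{1..n}. g i k) * (\<Sum>u\<in>Sset n m k. Wl g k u)"
      by (rule sum_product[symmetric])
    finally show ?thesis using gs Suc.prems by simp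
  qed
  have sB: "(\<Sum>u\<in>?B. Wl g k u) = (\<Sum>u\<in>Sset n m (Suc k). Wl g (Suc k) u)"
    by (subst sum.reindex[OF injB]) simp
  have split: "(\<Sum>u\<in>Sset n (Suc m) k. Wl g k u) = (\<Sum>u\<in>?A. Wl g k u) + (\<Sum>u\<in>?B. Wl g k u)"
    unfolding Sset_Suc by (rule sum.union_disjoint) (auto simp: finite_Sset)
  define r where "r = n - k"
  show ?case
  proof (cases "k = n")
    case True
    have "Sset n m (Suc k) = {}" using okl_le True by (fastforce simp: Sset_def)
    then show ?thesis using True split sA Suc.IH[of k] Suc.prems by simp
  next
    case False
    then have r1: "r \<ge> 1" using Suc.prems r_def by simp
    have IB: "(\<Sum>u\<in>Sset n m (Suc k). Wl g (Suc k) u) = of_nat (m choose (r - 1)) * Q ^ (m - (r - 1))"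
    proof -
      have "n - Suc k = r - 1" using r_def by simp
      moreover have "Suc k \<le> n" using False Suc.prems by simp
      ultimately show ?thesis using Suc.IH[of "Suc k"] by simp
    qed
    have IA: "(\<Sum>u\<in>Sset n m k. Wl g k u) = of_nat (m choose r) * Q ^ (m - r)"
      using Suc.IH[of k] Suc.prems r_def by simp
    have e1: "Q * (of_nat (m choose r) * Q ^ (m - r)) = of_nat (m choose r) * Q ^ (Suc m - r)"
    proof (cases "r \<le> m")
      case True then show ?thesis by (simp add: Suc_diff_le ac_simps)
    next
      case False then show ?thesis by (simp add: binomial_eq_0)
    qed
    have e2: "of_nat (m choose (r - 1)) * Q ^ (m - (r - 1)) = of_nat (m choose (r - 1)) * Q ^ (Suc m - r)"
    proof (cases "r \<le> Suc m")
      case True then show ?thesis using r1 by simp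
    next
      case False then have "m < r - 1" by simp
      then show ?thesis by (simp add: binomial_eq_0)
    qed
    have ch: "Suc m choose r = (m choose (r - 1)) + (m choose r)"
    proof -
      obtain r' where "r = Suc r'" using r1 by (cases r) auto
      then show ?thesis by simp
    qed
    show ?thesis
      unfolding split sA sB IA IB e1 e2 r_def[symmetric] ch
      by (simp only: of_nat_add distrib_right add.commute)
  qed
qed

lemma wbox_const_le: "1 \<le> i \<Longrightarrow> i \<le> k \<Longrightarrow> k \<le> n \<Longrightarrow>
   wbox n (\<lambda>_. p) (\<lambda>_. q) i k = p ^ (n - 1 - (k - i)) * (q::'a::comm_ring_1) ^ (k - i)"
proof -
  assume a: "1 \<le> i" "i \<le> k" "k \<le> n"
  have e: "n - 1 - (k - i) = (i - 1) + (n - k)" using a by simp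
  show ?thesis using a unfolding wbox_def e power_add by (simp add: ac_simps)
qed

lemma wbox_const_gt: "k < i \<Longrightarrow> i \<le> n \<Longrightarrow>
   wbox n (\<lambda>_. p) (\<lambda>_. q) i k = p ^ (n - 1 - (k + n - i)) * (q::'a::comm_ring_1) ^ (k + n - i)"
proof -
  assume a: "k < i" "i \<le> n"
  have e: "n - 1 - (k + n - i) = i - k - 1" "k + n - i = k + (n - i)" using a by simp_all
  show ?thesis using a unfolding wbox_def e power_add by (simp add: ac_simps)
qed

lemma wbox_sum:
  assumes "1 \<le> k" "k \<le> n"
  shows "(\<Sum>i\<in>{1..n}. wbox n (\<lambda>_. p) (\<lambda>_. q) i k) = qint n p (q::'a::comm_ring_1)"
  unfolding qint_def
proof (rule sum.reindex_bij_witness[where j = "\<lambda>i. if i \<le> k then k - i else k + n - i"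
      and i = "\<lambda>b. if b < k then k - b else k + n - b"])
  fix a assume a: "a \<in> {1..n}"
  show "(if (if a \<le> k then k - a else k + n - a) < k then k - (if a \<le> k then k - a else k + n - a)
         else k + n - (if a \<le> k then k - a else k + n - a)) = a"
    using a assms by auto
  show "(if a \<le> k then k - a else k + n - a) \<in> {..<n}" using a assms by auto
  show "p ^ (n - 1 - (if a \<le> k then k - a else k + n - a)) * q ^ (if a \<le> k then k - a else k + n - a)
        = wbox n (\<lambda>_. p) (\<lambda>_. q) a k"
    using a assms by (auto simp: wbox_const_le wbox_const_gt)
next
  fix b assume b: "b \<in> {..<n}"
  show "(if (if b < k then k - b else k + n - b) \<le> k then k - (if b < k then k - b else k + n - b)
         else k + n - (if b < k then k - b else k + n - b)) = b"
    using b assms by auto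
  show "(if b < k then k - b else k + n - b) \<in> {1..n}" using b assms by auto
qed


lemma Wl_prod: "Wl g k u = (\<Prod>j<length u. case u!j of Box i \<Rightarrow> g i (k + nbt u j) | Bul _ \<Rightarrow> 1)"
proof (induction u arbitrary: k)
  case Nil then show ?case by simp
next
  case (Cons x u)
  show ?case
  proof (cases x)
    case (Bul j)
    show ?thesis unfolding Bul length_Cons prod.lessThan_Suc_shift
      using Cons.IH[of "Suc k"] by (simp add: nbt_Cons cong: letter.case_cong)
  next
    case (Box i)
    show ?thesis unfolding Box length_Cons prod.lessThan_Suc_shift
      using Cons.IH[of k] by (simp add: nbt_Cons cong: letter.case_cong)
  qed
qed

lemma Zset:
  assumes "1 \<le> n" "n \<le> L"
  shows "{w \<in> Omega L n. w ! 0 = Bul 1} = (\<lambda>u. Bul 1 # u) ` Sset n (L - 1) 1"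
proof (intro set_eqI iffI)
  fix w assume "w \<in> {w \<in> Omega L n. w ! 0 = Bul 1}"
  then have om: "w \<in> Omega L n" and w0: "w!0 = Bul 1" by auto
  have len: "length w = L" using om unfolding Omega_def by simp
  then obtain u where u: "w = Bul 1 # u" using w0 assms by (cases w) auto
  have "okw n w" by (rule Omega_okw[OF om assms(1) w0])
  then have "okl n 0 w" by (simp add: okl_okw)
  then have "okl n 1 u" using u by simp
  then have "u \<in> Sset n (L - 1) 1" using len u by (simp add: Sset_def)
  then show "w \<in> (\<lambda>u. Bul 1 # u) ` Sset n (L - 1) 1" using u by blast
next
  fix w assume "w \<in> (\<lambda>u. Bul 1 # u) ` Sset n (L - 1) 1"
  then obtain u where u: "w = Bul 1 # u" "u \<in> Sset n (L - 1) 1" by blast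
  then have "okl n 0 w" "length w = L" using assms by (auto simp: Sset_def)
  then have "okw n w" "length w = L" by (simp_all add: okl_okw)
  then have "w \<in> Omega L n" using okw_Omega[of n w] assms u(1) by simp
  then show "w \<in> {w \<in> Omega L n. w ! 0 = Bul 1}" using u(1) by simp
qed

theorem proposition4p9:
  fixes p q :: "'a::comm_ring_1" and L n :: nat
  assumes "1 \<le> n" and "n \<le> L"
  shows "Zpart L n (\<lambda>_. p) (\<lambda>_. q) = of_nat ((L - 1) choose (n - 1)) * qint n p q ^ (L - n)"
proof -
  define g where "g = wbox n (\<lambda>_. p) (\<lambda>_. q)"
  have inj: "inj_on (\<lambda>u. Bul 1 # u) (Sset n (L - 1) 1)" by (auto simp: inj_on_def)
  have wtW: "wt n (\<lambda>_. p) (\<lambda>_. q) (Bul 1 # u) = Wl g 1 u" if u: "u \<in> Sset n (L - 1) 1" for u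
  proof -
    have ok: "okw n (Bul 1 # u)" using okl_okw[of n "Bul 1 # u"] u by (simp add: Sset_def)
    have "wt n (\<lambda>_. p) (\<lambda>_. q) (Bul 1 # u) =
      (\<Prod>j<length (Bul 1 # u). case (Bul 1 # u)!j of Box i \<Rightarrow> g i (nbt (Bul 1 # u) j) | Bul _ \<Rightarrow> 1)"
      unfolding g_def by (rule wt_prod[OF ok assms(1)]) simp_all
    also have "\<dots> = Wl g 0 (Bul 1 # u)"
      unfolding Wl_prod add_0 ..
    finally have "wt n (\<lambda>_. p) (\<lambda>_. q) (Bul 1 # u) = Wl g 0 (Bul 1 # u)" .
    then show ?thesis by simp
  qed
  have "Zpart L n (\<lambda>_. p) (\<lambda>_. q) = (\<Sum>u\<in>Sset n (L - 1) 1. wt n (\<lambda>_. p) (\<lambda>_. q) (Bul 1 # u))"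
    unfolding Zpart_def Zset[OF assms] by (subst sum.reindex[OF inj]) simp
  also have "\<dots> = (\<Sum>u\<in>Sset n (L - 1) 1. Wl g 1 u)" using wtW by (rule sum.cong[OF refl])
  also have "\<dots> = of_nat ((L - 1) choose (n - 1)) * qint n p q ^ ((L - 1) - (n - 1))"
  proof -
    have gs: "(\<Sum>i\<in>{1..n}. g i k) = qint n p q" if "1 \<le> k" "k \<le> n" for k
      unfolding g_def using that by (rule wbox_sum)
    show ?thesis using count_sum[of n g "qint n p q", OF gs, of 1 "L - 1"] assms by simp
  qed
  also have "(L - 1) - (n - 1) = L - n" using assms by simp
  finally show ?thesis .
qed

end
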